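(* Let $x_1,\dots,x_k\in\ell^\infty$ with $|L_{x_i}|=n_i\in\mathbb{N}$ for $1\le i\le k$, and let $z=\sum_{i=1}^k a_ix_i$ with real coefficients and $a_k\ne0$. Then $$\frac{n_k}{n_1\cdots n_{k-1}}\le |L_z|\le n_1\cdots n_k.$$
   Context: $\ell^\infty$ is the space of bounded real sequences. For $x\in\ell^\infty$, $L_x$ denotes the set of accumulation points (subsequential limits) of $x$ and $|L_x|$ its cardinality. *)

theory Defs
  imports "HOL-Analysis.Analysis"
begin

definition acc_points :: "(nat \<Rightarrow> real) \<Rightarrow> real set" where
  "acc_points x = {l. \<exists>r. strict_mono r \<and> (x \<circ> r) \<longlonglongrightarrow> l}"

end

theory Submission
  imports Defs
begin

lemma bseq_comp: fixes X :: "nat \<Rightarrow> real" shows "Bseq X \<Longrightarrow> Bseq (\<lambda>n. X (f n))"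
  unfolding Bseq_def by auto

lemma bseq_conv_sub: fixes X :: "nat \<Rightarrow> real" assumes "Bseq X"
  shows "\<exists>f. strict_mono f \<and> convergent (\<lambda>n. X (f n))"
proof -
  obtain f where f: "strict_mono f" "monoseq (\<lambda>n. X (f n))" using seq_monosub by blast
  have "Bseq (\<lambda>n. X (f n))" using assms bseq_comp by blast
  then show ?thesis using f Bseq_monoseq_convergent by blast
qed

lemma common_subseq:
  fixes x :: "nat \<Rightarrow> nat \<Rightarrow> real" and r :: "nat \<Rightarrow> nat"
  assumes "finite I" "\<forall>i\<in>I. Bseq (x i)"
  shows "\<exists>s. strict_mono s \<and> (\<forall>i\<in>I. convergent (\<lambda>n. x i (r (s n))))"
  using assms
proof (induction I arbitrary: r rule: finite_induct)
  case empty
  show ?case by (intro exI[of _ id]) (simp add: strict_mono_def)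
next
  case (insert j I)
  then obtain s where s: "strict_mono s" "\<forall>i\<in>I. convergent (\<lambda>n. x i (r (s n)))" by blast
  have "Bseq (\<lambda>n. x j (r (s n)))" using insert bseq_comp by auto
  then obtain t where t: "strict_mono t" "convergent (\<lambda>n. x j (r (s (t n))))"
    using bseq_conv_sub[of "\<lambda>n. x j (r (s n))"] by auto
  have "\<forall>i\<in>I. convergent (\<lambda>n. x i (r (s (t n))))"
  proof
    fix i assume "i \<in> I"
    then obtain L where "(\<lambda>n. x i (r (s n))) \<longlonglongrightarrow> L" using s convergent_def by blast
    from LIMSEQ_subseq_LIMSEQ[OF this t(1)] show "convergent (\<lambda>n. x i (r (s (t n))))"
      by (auto simp: convergent_def o_def)
  qed
  moreover have "strict_mono (\<lambda>n. s (t n))" using strict_mono_o[OF s(1) t(1)] by (simp add: o_def)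
  ultimately show ?case using t by (intro exI[of _ "\<lambda>n. s (t n)"]) auto
qed

lemma acc_pointsI: "strict_mono r \<Longrightarrow> (\<lambda>n. x (r n)) \<longlonglongrightarrow> l \<Longrightarrow> l \<in> acc_points x"
  unfolding acc_points_def by (auto simp: o_def)

lemma key:
  fixes x :: "nat \<Rightarrow> nat \<Rightarrow> real" and r :: "nat \<Rightarrow> nat"
  assumes "\<forall>i\<in>{1..k}. Bseq (x i)" "strict_mono r"
  shows "\<exists>s f. strict_mono s \<and> strict_mono (r \<circ> s) \<and> f \<in> Pi\<^sub>E {1..k} (\<lambda>i. acc_points (x i))
     \<and> (\<forall>i\<in>{1..k}. (\<lambda>n. x i (r (s n))) \<longlonglongrightarrow> f i)"
proof -
  obtain s where s: "strict_mono s" "\<forall>i\<in>{1..k}. convergent (\<lambda>n. x i (r (s n)))"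
    using common_subseq[of "{1..k}" x r] assms by auto
  define f where "f = restrict (\<lambda>i. lim (\<lambda>n. x i (r (s n)))) {1..k}"
  have sm: "strict_mono (r \<circ> s)" using s assms strict_mono_o by blast
  have lim: "\<forall>i\<in>{1..k}. (\<lambda>n. x i (r (s n))) \<longlonglongrightarrow> f i"
    using s by (auto simp: f_def convergent_LIMSEQ_iff)
  have "f \<in> Pi\<^sub>E {1..k} (\<lambda>i. acc_points (x i))"
    unfolding f_def PiE_def Pi_def using lim sm acc_pointsI[of "r \<circ> s"] by (auto simp: f_def)
  then show ?thesis using sm lim s(1) by blast
qed

theorem lemma2p5:
  fixes x :: "nat \<Rightarrow> nat \<Rightarrow> real" and a :: "nat \<Rightarrow> real" and k :: nat
  assumes "k \<ge> 1"
    and "\<And>i. i \<in> {1..k} \<Longrightarrow> Bseq (x i)"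
    and "\<And>i. i \<in> {1..k} \<Longrightarrow> finite (acc_points (x i))"
    and "a k \<noteq> 0"
  defines "z \<equiv> (\<lambda>m. \<Sum>i=1..k. a i * x i m)"
  shows "real (card (acc_points (x k))) / (\<Prod>i=1..k-1. real (card (acc_points (x i))))
           \<le> real (card (acc_points z))
         \<and> finite (acc_points z)
         \<and> card (acc_points z) \<le> (\<Prod>i=1..k. card (acc_points (x i)))"
proof -
  let ?P = "Pi\<^sub>E {1..k} (\<lambda>i. acc_points (x i))"
  have B: "\<forall>i\<in>{1..k}. Bseq (x i)" using assms(2) by auto
  have sub1: "acc_points z \<subseteq> (\<lambda>f. \<Sum>i=1..k. a i * f i) ` ?P"
  proof
    fix w assume "w \<in> acc_points z"
    then obtain r where r: "strict_mono r" "(\<lambda>n. z (r n)) \<longlonglongrightarrow> w"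
      unfolding acc_points_def by (auto simp: o_def)
    obtain s f where sf: "strict_mono (r \<circ> s)" "f \<in> ?P" and s: "strict_mono s"
      and lims: "\<forall>i\<in>{1..k}. (\<lambda>n. x i (r (s n))) \<longlonglongrightarrow> f i"
      using key[OF B r(1)] by blast
    have "(\<lambda>n. z (r (s n))) \<longlonglongrightarrow> w" using LIMSEQ_subseq_LIMSEQ[OF r(2) s] by (simp add: o_def)
    moreover have "(\<lambda>n. z (r (s n))) \<longlonglongrightarrow> (\<Sum>i=1..k. a i * f i)"
      unfolding z_def
      by (rule tendsto_sum, rule tendsto_mult[OF tendsto_const]) (use lims in auto)
    ultimately have "w = (\<Sum>i=1..k. a i * f i)" using LIMSEQ_unique by blast
    then show "w \<in> (\<lambda>f. \<Sum>i=1..k. a i * f i) ` ?P" using sf(2) by (rule image_eqI)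
  qed
  have finP: "finite ?P" using assms(3) by (auto intro!: finite_PiE)
  have finz: "finite (acc_points z)" using finite_subset[OF sub1] finP by blast
  have up: "card (acc_points z) \<le> (\<Prod>i=1..k. card (acc_points (x i)))"
  proof -
    have "card (acc_points z) \<le> card ((\<lambda>f. \<Sum>i=1..k. a i * f i) ` ?P)"
      by (rule card_mono[OF _ sub1]) (rule finite_imageI[OF finP])
    also have "\<dots> \<le> card ?P" by (rule card_image_le) (rule finP)
    also have "\<dots> = (\<Prod>i=1..k. card (acc_points (x i)))" by (simp add: card_PiE)
    finally show ?thesis .
  qed
  let ?Q = "Pi\<^sub>E {1..k-1} (\<lambda>i. acc_points (x i))"
  let ?g = "\<lambda>(w, f). (w - (\<Sum>i=1..k-1. a i * f i)) / a k"
  have B': "\<forall>i\<in>{1..k-1}. Bseq (x i)" using B by auto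
  have sub2: "acc_points (x k) \<subseteq> ?g ` (acc_points z \<times> ?Q)"
  proof
    fix l assume "l \<in> acc_points (x k)"
    then obtain r where r: "strict_mono r" "(\<lambda>n. x k (r n)) \<longlonglongrightarrow> l"
      unfolding acc_points_def by (auto simp: o_def)
    obtain s f where sf: "strict_mono (r \<circ> s)" "f \<in> ?Q" and s: "strict_mono s"
      and lims: "\<forall>i\<in>{1..k-1}. (\<lambda>n. x i (r (s n))) \<longlonglongrightarrow> f i"
      using key[OF B' r(1)] by blast
    have lk: "(\<lambda>n. x k (r (s n))) \<longlonglongrightarrow> l" using LIMSEQ_subseq_LIMSEQ[OF r(2) s] by (simp add: o_def)
    have split: "{1..k} = insert k {1..k-1}" using assms(1) by auto
    have zs: "z m = a k * x k m + (\<Sum>i=1..k-1. a i * x i m)" for m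
      unfolding z_def split using assms(1) by simp
    define w where "w = a k * l + (\<Sum>i=1..k-1. a i * f i)"
    have "(\<lambda>n. z (r (s n))) \<longlonglongrightarrow> w"
      unfolding zs w_def
    proof (rule tendsto_add)
      show "(\<lambda>n. a k * x k (r (s n))) \<longlonglongrightarrow> a k * l" by (rule tendsto_mult[OF tendsto_const lk])
      show "(\<lambda>n. \<Sum>i = 1..k - 1. a i * x i (r (s n))) \<longlonglongrightarrow> (\<Sum>i = 1..k - 1. a i * f i)"
        by (rule tendsto_sum, rule tendsto_mult[OF tendsto_const]) (use lims in auto)
    qed
    hence wz: "w \<in> acc_points z" using acc_pointsI[OF sf(1), of z] by (simp add: o_def)
    have lg: "l = ?g (w, f)" using assms(4) by (simp add: w_def)
    show "l \<in> ?g ` (acc_points z \<times> ?Q)"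
    proof (rule image_eqI[where x="(w,f)"])
      show "l = ?g (w, f)" by (rule lg)
      show "(w, f) \<in> acc_points z \<times> ?Q" using wz sf(2) by (rule SigmaI)
    qed
  qed
  have finQ: "finite ?Q" using assms(3) by (auto intro!: finite_PiE)
  have "card (acc_points (x k)) \<le> card (?g ` (acc_points z \<times> ?Q))"
    by (rule card_mono[OF _ sub2]) (rule finite_imageI[OF finite_cartesian_product[OF finz finQ]])
  also have "\<dots> \<le> card (acc_points z \<times> ?Q)" by (rule card_image_le) (rule finite_cartesian_product[OF finz finQ])
  also have "\<dots> = card (acc_points z) * (\<Prod>i=1..k-1. card (acc_points (x i)))"
    by (simp add: card_cartesian_product card_PiE)
  finally have ineq: "real (card (acc_points (x k))) \<le> real (card (acc_points z)) * (\<Prod>i=1..k-1. real (card (acc_points (x i))))"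
    by (metis of_nat_le_iff of_nat_mult of_nat_prod)
  hence low: "real (card (acc_points (x k))) / (\<Prod>i=1..k-1. real (card (acc_points (x i))))
           \<le> real (card (acc_points z))"
  proof (cases "(\<Prod>i=1..k-1. real (card (acc_points (x i)))) = 0")
    case True then show ?thesis by (simp only: True div_by_0 of_nat_0_le_iff)
  next
    case False
    have "(\<Prod>i=1..k-1. real (card (acc_points (x i)))) \<ge> 0"
      by (rule prod_nonneg) simp
    hence "(\<Prod>i=1..k-1. real (card (acc_points (x i)))) > 0"
      using False by linarith
    then show ?thesis using ineq by (simp only: pos_divide_le_eq)
  qed
  show ?thesis using low finz up by blast
qed

end
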